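(* Let $N\in\mathbb{N}$ with $N\ge3$ and $n\in\mathbb{N}$ with $n\ge n_N$. Then there is a real $E$ with $|E|\le\frac{2\cdot10^{-2}}{24^{N/2}}n^{-\frac{N+2}{2}}$ such that \[ e^{\frac{\pi\sqrt{24n+1}}{3\sqrt2}}=e^{2\pi\sqrt{\frac n3}}\left(\sum_{m=0}^{N+1}\frac{b(m)}{n^{\frac m2}}+E\right). \]
   Context: $n_N:=\left(\frac{3(3N+4)\log(6N+8)}{1.3^2}\right)^4$. For $m\in\mathbb{N}_0$: $e_1(0):=1$, $e_1(m):=\frac{(2m-1)!}{(-96)^m}\sum_{\nu=1}^{m}\frac{(-\pi^2/18)^\nu}{(2\nu-1)!(\nu+m)!(m-\nu)!}$ for $m\ge1$; $o_1(m):=\frac{\pi(2m)!}{24\sqrt3(-96)^m}\sum_{\nu=0}^{m}\frac{(-\pi^2/18)^\nu}{(2\nu)!(m-\nu)!(\nu+m+1)!}$; and $b(2m):=e_1(m)$, $b(2m+1):=o_1(m)$. *)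

theory Defs
  imports "HOL-Analysis.Analysis"
begin

definition nN :: "nat \<Rightarrow> real" where
  "nN N = ((3 * (3 * real N + 4) * ln (6 * real N + 8)) / (1.3 ^ 2)) ^ 4"

definition e1 :: "nat \<Rightarrow> real" where
  "e1 m = (if m = 0 then 1 else
     fact (2*m - 1) / (-96) ^ m *
     (\<Sum>\<nu>=1..m. (-(pi^2)/18) ^ \<nu> / (fact (2*\<nu> - 1) * fact (\<nu> + m) * fact (m - \<nu>))))"

definition o1 :: "nat \<Rightarrow> real" where
  "o1 m = pi * fact (2*m) / (24 * sqrt 3 * (-96) ^ m) *
     (\<Sum>\<nu>=0..m. (-(pi^2)/18) ^ \<nu> / (fact (2*\<nu>) * fact (m - \<nu>) * fact (\<nu> + m + 1)))"

definition b :: "nat \<Rightarrow> real" where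
  "b k = (if even k then e1 (k div 2) else o1 (k div 2))"

end

theory Submission
  imports Defs "HOL-Complex_Analysis.Complex_Analysis"
begin

definition pp :: "nat \<Rightarrow> nat \<Rightarrow> real" where
 "pp k j = (if j = 0 then (if k = 0 then 1 else 0) else if j \<le> k \<and> even (k - j) then
    (-1)^((k-j) div 2) * fact (k-1) / (2^k * fact ((k-j) div 2) * fact ((k+j) div 2) * fact (j-1)) else 0)"

lemma pp_form: "pp (j + 2*i) j = (if j = 0 then (if i=0 then 1 else 0) else
   (-1)^i * fact (j+2*i-1) / (2^(j+2*i) * fact i * fact (j+i) * fact (j-1)))"
  by (simp add: pp_def)

lemma pp_zero: "\<not>(\<exists>i. k = j + 2*i) \<Longrightarrow> pp k j = 0"
proof -
  assume h: "\<not>(\<exists>i. k = j + 2*i)"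
  have "\<not> (j \<le> k \<and> even (k - j))"
  proof
    assume "j \<le> k \<and> even (k - j)"
    then obtain i where "k - j = 2*i" by (metis evenE)
    with \<open>j \<le> k \<and> even (k - j)\<close> have "k = j + 2*i" by simp
    with h show False by blast
  qed
  moreover have "j = 0 \<Longrightarrow> k \<noteq> 0"
  proof
    assume "j = 0" "k = 0"
    hence "k = j + 2*0" by simp
    with h show False by blast
  qed
  ultimately show ?thesis unfolding pp_def by auto
qed

lemma pp_k0: "k \<ge> 1 \<Longrightarrow> pp k 0 = 0" by (simp add: pp_def)


lemma L3: assumes "k \<ge> 1"
  shows "(real k - real j) * pp k j + real (k-1) * real j * pp (k-1) (j+1) = 0"
proof (cases "j = 0")
  case True thus ?thesis using assms by (simp add: pp_k0)
next
  case False
  then obtain j0 where j: "j = Suc j0" by (cases j) auto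
  show ?thesis
  proof (cases "\<exists>i. k = j + 2*i")
    case False
    have "\<not>(\<exists>i. k - 1 = (j+1) + 2*i)"
    proof
      assume "\<exists>i. k - 1 = (j+1) + 2*i"
      then obtain i where "k - 1 = (j+1) + 2*i" by blast
      hence "k = j + 2*(Suc i)" using assms by simp
      thus False using False by blast
    qed
    thus ?thesis using False by (simp add: pp_zero)
  next
    case True
    then obtain i where k: "k = j + 2*i" by blast
    show ?thesis
    proof (cases i)
      case 0
      have "\<not>(\<exists>i. k - 1 = (j+1) + 2*i)" using k 0 j by auto
      thus ?thesis using k 0 by (simp add: pp_zero)
    next
      case (Suc i')
      have jn: "j \<noteq> 0" using j by simp
      have e1: "pp k j = (-1)^i * fact (j+2*i-1) / (2^(j+2*i) * fact i * fact (j+i) * fact (j-1))"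
        using pp_form[of j i] k jn by simp
      have e2: "pp (k-1) (j+1) = (-1)^i' * fact (j+1+2*i'-1) / (2^(j+1+2*i') * fact i' * fact (j+1+i') * fact (j+1-1))"
        using pp_form[of "j+1" i'] k Suc by simp
      have a1: "j+2*i-1 = Suc (j0+2*i'+1)" "j+1+2*i'-1 = j0+2*i'+1" "j+i = j0+i'+2" "j+1+i' = j0+i'+2"
        "j - 1 = j0" "j+1-1 = Suc j0" "j+2*i = Suc (j0+2*i'+2)" "j+1+2*i' = j0+2*i'+2"
        using j Suc by auto
      have m1: "(-1::real)^i = - ((-1)^i')" using Suc by simp
      have r1: "real k - real j = 2 * real i' + 2" using k Suc by simp
      have r2: "real (k-1) = real j0 + 2 * real i' + 2" using k Suc j by simp
      have r3: "real j = real j0 + 1" using j by simp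
      define A where "A = (fact (j0 + 2*i' + 1) :: real)"
      define B where "B = (fact i' :: real)"
      define C where "C = (fact (j0+i'+2) :: real)"
      define D where "D = (fact j0 :: real)"
      define T where "T = (2::real)^(j0+2*i'+2)"
      have pos: "A > 0" "B > 0" "C > 0" "D > 0" "T > 0" unfolding A_def B_def C_def D_def T_def by auto
      have f1: "fact (Suc (j0 + 2*i' + 1)) = real (j0 + 2*i' + 2) * fact (j0 + 2*i' + 1)"
        by (simp only: fact_Suc) simp
      have f2: "fact i = real (Suc i') * fact i'" using Suc by simp
      have f3: "fact (Suc j0) = real (Suc j0) * fact j0" by simp
      have p: "(2::real)^(Suc (j0+2*i'+2)) = 2 * 2^(j0+2*i'+2)" by simp
      define S where "S = ((-1::real)^i')"
      have G: "(real k - real j) * pp k j + real (k-1) * real j * pp (k-1) (j+1) =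
        (2 * real i' + 2) * (- S * (real (j0 + 2*i' + 2) * A) / (2 * T * (real (Suc i') * B) * C * D))
        + (real j0 + 2 * real i' + 2) * (real j0 + 1) * (S * A / (T * B * C * (real (Suc j0) * D)))"
        unfolding r1 r2 unfolding e1 e2 unfolding a1 m1 unfolding f1 f2 f3 p r3 S_def[symmetric]
        unfolding A_def[symmetric] B_def[symmetric] C_def[symmetric] D_def[symmetric] T_def[symmetric]
        by (simp add: A_def)
      have q1: "real (Suc i') \<noteq> 0" "real (Suc j0) \<noteq> 0" by auto
      have t1: "(2 * real i' + 2) * (- S * (real (j0 + 2*i' + 2) * A) / (2 * T * (real (Suc i') * B) * C * D))
         = - (S * A * real (j0 + 2*i' + 2) / (T * B * C * D))"
        using pos q1 by (simp add: divide_simps; simp add: algebra_simps)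
      have t2: "(real j0 + 2 * real i' + 2) * (real j0 + 1) * (S * A / (T * B * C * (real (Suc j0) * D)))
         = S * A * real (j0 + 2*i' + 2) / (T * B * C * D)"
        using pos q1 by (simp add: divide_simps; simp add: algebra_simps)
      show ?thesis unfolding G t1 t2 by simp
    qed
  qed
qed

lemma pp_diag: "pp m m = 1 / (2^m * fact m)"
proof (cases m)
  case 0 thus ?thesis by (simp add: pp_def)
next
  case (Suc m0)
  have "pp m m = pp (m + 2*0) m" by simp
  also have "... = fact (m - 1) / (2^m * fact m * fact (m-1))" using Suc by (simp only: pp_form) simp
  finally show ?thesis by simp
qed

lemma L1: assumes "k \<ge> 1"
  shows "(real k + real j + 1) * pp k (j+1) + (real k - 2) * pp (k-2) (j+1) = pp (k-1) j"
proof (cases "\<exists>i. k = (j+1) + 2*i")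
  case False
  have n1: "\<not>(\<exists>i. k - 2 = (j+1) + 2*i)"
  proof
    assume "\<exists>i. k - 2 = (j+1) + 2*i"
    then obtain i where "k - 2 = (j+1) + 2*i" by blast
    hence "k = (j+1) + 2*(Suc i)" by simp
    thus False using False by blast
  qed
  have n2: "\<not>(\<exists>i. k - 1 = j + 2*i)"
  proof
    assume "\<exists>i. k - 1 = j + 2*i"
    then obtain i where "k - 1 = j + 2*i" by blast
    hence "k = (j+1) + 2*i" using assms by simp
    thus False using False by blast
  qed
  show ?thesis using False n1 n2 by (simp add: pp_zero)
next
  case True
  then obtain i where k: "k = (j+1) + 2*i" by blast
  show ?thesis
  proof (cases i)
    case 0
    have n1: "\<not>(\<exists>i. k - 2 = (j+1) + 2*i)" using k 0 by auto
    have "(real k + real j + 1) * pp k (j+1) = pp (k-1) j"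
      using k 0 by (simp add: pp_diag divide_simps; simp add: algebra_simps)
    thus ?thesis using n1 by (simp add: pp_zero)
  next
    case (Suc i')
    show ?thesis
    proof (cases j)
      case 0
      have e1: "pp k (j+1) = (-1)^i * fact (j+1+2*i-1) / (2^(j+1+2*i) * fact i * fact (j+1+i) * fact (j+1-1))"
        using pp_form[of "j+1" i] k by simp
      have e2: "pp (k-2) (j+1) = (-1)^i' * fact (j+1+2*i'-1) / (2^(j+1+2*i') * fact i' * fact (j+1+i') * fact (j+1-1))"
        using pp_form[of "j+1" i'] k Suc by simp
      have e3: "pp (k-1) j = 0" using k Suc 0 by (simp add: pp_def)
      have a1: "j+1+2*i-1 = Suc (Suc (2*i'))" "j+1+2*i'-1 = 2*i'" "j+1+i = Suc (Suc i')" "j+1+i' = Suc i'"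
        "j+1-1 = 0" "j+1+2*i = Suc (Suc (2*i'+1))"
        using 0 Suc by auto
      have m1: "(-1::real)^i = - ((-1)^i')" using Suc by simp
      have r1: "real k + real j + 1 = 2 * real i' + 4" "real k - 2 = 2 * real i' + 1" using k Suc 0 by auto
      define A where "A = (fact (2*i') :: real)"
      define B where "B = (fact i' :: real)"
      define C where "C = (fact (Suc i') :: real)"
      define T where "T = (2::real)^(2*i'+1)"
      define S where "S = ((-1::real)^i')"
      have pos: "A > 0" "B > 0" "C > 0" "T > 0" unfolding A_def B_def C_def T_def by auto
      have f1: "fact (Suc (Suc (2*i'))) = real (2*i'+2) * (real (2*i'+1) * A)" unfolding A_def
        by (simp only: fact_Suc) simp
      have f2: "fact i = real (Suc i') * B" using Suc B_def by simp
      have f3: "fact (Suc (Suc i')) = real (i'+2) * C" unfolding C_def by (simp only: fact_Suc) simp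
      have p: "(2::real)^(Suc (Suc (2*i'+1))) = 4 * T" unfolding T_def by simp
      have G: "(real k + real j + 1) * pp k (j+1) + (real k - 2) * pp (k-2) (j+1) =
         (2 * real i' + 4) * (- S * (real (2*i'+2) * (real (2*i'+1) * A)) / (4 * T * (real (Suc i') * B) * (real (i'+2) * C) * 1))
         + (2 * real i' + 1) * (S * A / (T * B * C * 1))"
        unfolding r1 unfolding e1 e2 unfolding a1 m1 unfolding f1 f2 f3 p S_def[symmetric]
        unfolding A_def[symmetric] B_def[symmetric] C_def[symmetric] T_def[symmetric]
        by (simp add: A_def T_def 0)
      have q1: "real (Suc i') \<noteq> 0" "real (i'+2) \<noteq> 0" by auto
      have t1: "(2 * real i' + 4) * (- S * (real (2*i'+2) * (real (2*i'+1) * A)) / (4 * T * (real (Suc i') * B) * (real (i'+2) * C) * 1))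
          = - ((2 * real i' + 1) * (S * A / (T * B * C * 1)))"
        using pos q1 by (simp add: divide_simps; simp add: algebra_simps)
      show ?thesis unfolding G t1 e3 by simp
    next
      case (Suc j0)
      have e1: "pp k (j+1) = (-1)^i * fact (j+1+2*i-1) / (2^(j+1+2*i) * fact i * fact (j+1+i) * fact (j+1-1))"
        using pp_form[of "j+1" i] k by simp
      have e2: "pp (k-2) (j+1) = (-1)^i' * fact (j+1+2*i'-1) / (2^(j+1+2*i') * fact i' * fact (j+1+i') * fact (j+1-1))"
        using pp_form[of "j+1" i'] k \<open>i = Suc i'\<close> by simp
      have e3: "pp (k-1) j = (-1)^i * fact (j+2*i-1) / (2^(j+2*i) * fact i * fact (j+i) * fact (j-1))"
        using pp_form[of j i] k Suc by simp
      have a1: "j+1+2*i-1 = Suc (Suc (j0+2*i'+1))" "j+1+2*i'-1 = j0+2*i'+1" "j+1+i = Suc (j0+i'+2)"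
        "j+1+i' = j0+i'+2" "j+1-1 = Suc j0" "j+1+2*i = Suc (Suc (j0+2*i'+2))"
        "j+2*i-1 = Suc (j0+2*i'+1)" "j+2*i = Suc (j0+2*i'+2)" "j+i = j0+i'+2" "j-1 = j0" "j+1+2*i' = j0+2*i'+2"
        using Suc \<open>i = Suc i'\<close> by auto
      have m1: "(-1::real)^i = - ((-1)^i')" using \<open>i = Suc i'\<close> by simp
      have r1: "real k + real j + 1 = 2 * real j0 + 2 * real i' + 6" "real k - 2 = real j0 + 2 * real i' + 2"
        using k Suc \<open>i = Suc i'\<close> by auto
      define A where "A = (fact (j0+2*i'+1) :: real)"
      define B where "B = (fact i' :: real)"
      define C where "C = (fact (j0+i'+2) :: real)"
      define D where "D = (fact j0 :: real)"
      define T where "T = (2::real)^(j0+2*i'+2)"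
      define S where "S = ((-1::real)^i')"
      have pos: "A > 0" "B > 0" "C > 0" "D > 0" "T > 0" unfolding A_def B_def C_def D_def T_def by auto
      have f1: "fact (Suc (Suc (j0+2*i'+1))) = real (j0+2*i'+3) * (real (j0+2*i'+2) * A)" unfolding A_def
        by (simp only: fact_Suc) simp
      have f1': "fact (Suc (j0+2*i'+1)) = real (j0+2*i'+2) * A" unfolding A_def
        by (simp only: fact_Suc) simp
      have f2: "fact i = real (Suc i') * B" using \<open>i = Suc i'\<close> B_def by simp
      have f3: "fact (Suc (j0+i'+2)) = real (j0+i'+3) * C" unfolding C_def by (simp only: fact_Suc) simp
      have f4: "fact (Suc j0) = real (Suc j0) * D" unfolding D_def by simp
      have p: "(2::real)^(Suc (Suc (j0+2*i'+2))) = 4 * T" "(2::real)^(Suc (j0+2*i'+2)) = 2 * T" unfolding T_def by simp_all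
      have G: "(real k + real j + 1) * pp k (j+1) + (real k - 2) * pp (k-2) (j+1) =
         (2 * real j0 + 2 * real i' + 6) * (- S * (real (j0+2*i'+3) * (real (j0+2*i'+2) * A)) / (4 * T * (real (Suc i') * B) * (real (j0+i'+3) * C) * (real (Suc j0) * D)))
         + (real j0 + 2 * real i' + 2) * (S * A / (T * B * C * (real (Suc j0) * D)))"
        unfolding r1 unfolding e1 e2 unfolding a1 m1 unfolding f1 f2 f3 f4 p S_def[symmetric]
        unfolding A_def[symmetric] B_def[symmetric] C_def[symmetric] D_def[symmetric] T_def[symmetric]
        by (simp add: A_def)
      have G3: "pp (k-1) j = - S * (real (j0+2*i'+2) * A) / (2 * T * (real (Suc i') * B) * C * D)"
        unfolding e3 unfolding a1 m1 unfolding f1' f2 p S_def[symmetric]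
        unfolding A_def[symmetric] B_def[symmetric] C_def[symmetric] D_def[symmetric] T_def[symmetric]
        by (simp add: A_def T_def Suc)
      have q1: "real (Suc i') \<noteq> 0" "real (j0+i'+3) \<noteq> 0" "real (Suc j0) \<noteq> 0" by auto
      show ?thesis unfolding G G3
        using pos q1 by (simp add: divide_simps; simp add: algebra_simps)
    qed
  qed
qed

definition Cp :: "nat \<Rightarrow> real poly" where
  "Cp k = (\<Sum>j\<le>k. monom (pp k j) j)"

lemma pp_big: "n > k \<Longrightarrow> pp k n = 0" by (simp add: pp_def)

lemma coeff_Cp: "coeff (Cp k) n = pp k n"
  unfolding Cp_def by (auto simp: coeff_sum coeff_monom pp_big)

lemma PE3: assumes "k \<ge> 1"
  shows "pCons 0 (smult (real k) (Cp k)) + pCons 0 (smult (real k - 1) (pderiv (Cp (k-1))))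
        - smult (real k - 1) (Cp (k-1)) = pCons 0 (pCons 0 (pderiv (Cp k)))"
proof (rule poly_eqI)
  fix n show "coeff (pCons 0 (smult (real k) (Cp k)) + pCons 0 (smult (real k - 1) (pderiv (Cp (k-1))))
        - smult (real k - 1) (Cp (k-1))) n = coeff (pCons 0 (pCons 0 (pderiv (Cp k)))) n"
  proof (cases n)
    case 0
    have "(real k - 1) * pp (k-1) 0 = 0" using assms by (cases "k = 1") (auto simp: pp_k0)
    thus ?thesis using 0 by (simp add: coeff_Cp)
  next
    case (Suc j)
    have "(real k - real j) * pp k j + real (k-1) * real j * pp (k-1) (j+1) = 0" by (rule L3[OF assms])
    moreover have "real (k-1) = real k - 1" using assms by simp
    ultimately show ?thesis using Suc by (cases j) (auto simp: coeff_Cp coeff_pderiv coeff_pCons algebra_simps)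
  qed
qed

lemma PE1: assumes "k \<ge> 2"
  shows "smult (real k) (Cp k) + smult (real k - 2) (Cp (k-2)) + pCons 0 (pderiv (Cp k)) = pCons 0 (Cp (k-1))"
proof (rule poly_eqI)
  fix n show "coeff (smult (real k) (Cp k) + smult (real k - 2) (Cp (k-2)) + pCons 0 (pderiv (Cp k))) n
     = coeff (pCons 0 (Cp (k-1))) n"
  proof (cases n)
    case 0
    have "(real k - 2) * pp (k-2) 0 = 0" using assms by (cases "k = 2") (auto simp: pp_k0)
    thus ?thesis using 0 assms by (simp add: coeff_Cp pp_k0)
  next
    case (Suc j)
    have "(real k + real j + 1) * pp k (j+1) + (real k - 2) * pp (k-2) (j+1) = pp (k-1) j" by (rule L1) (use assms in simp)
    thus ?thesis using Suc by (auto simp: coeff_Cp coeff_pderiv algebra_simps)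
  qed
qed

lemma PE1': "smult 1 (Cp 1) + pCons 0 (pderiv (Cp 1)) = pCons 0 (Cp 0)"
proof (rule poly_eqI)
  fix n show "coeff (smult 1 (Cp 1) + pCons 0 (pderiv (Cp 1))) n = coeff (pCons 0 (Cp 0)) n"
  proof (cases n)
    case 0 thus ?thesis by (simp add: coeff_Cp pp_k0)
  next
    case (Suc j)
    have "(real 1 + real j + 1) * pp 1 (j+1) + (real 1 - 2) * pp (1-2) (j+1) = pp (1-1) j" by (rule L1) simp
    moreover have "pp 0 (j+1) = 0" by (simp add: pp_def)
    ultimately show ?thesis using Suc by (auto simp: coeff_Cp coeff_pderiv algebra_simps)
  qed
qed

definition cc :: "real \<Rightarrow> nat \<Rightarrow> real" where "cc a k = poly (Cp k) a"
definition dd :: "real \<Rightarrow> nat \<Rightarrow> real" where "dd a k = poly (pderiv (Cp k)) a"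

lemma R1: "k \<ge> 1 \<Longrightarrow> real k * cc a k + (if k \<ge> 2 then (real k - 2) * cc a (k-2) else 0) + a * dd a k = a * cc a (k-1)"
proof -
  assume k: "k \<ge> 1"
  show ?thesis
  proof (cases "k \<ge> 2")
    case True
    from arg_cong[OF PE1[OF True], of "\<lambda>p. poly p a"] show ?thesis using True
      by (simp add: cc_def dd_def)
  next
    case False
    hence "k = 1" using k by simp
    from arg_cong[OF PE1', of "\<lambda>p. poly p a"] show ?thesis using \<open>k = 1\<close>
      by (simp add: cc_def dd_def)
  qed
qed

lemma R3: "k \<ge> 1 \<Longrightarrow> a * real k * cc a k + a * (real k - 1) * dd a (k-1) - (real k - 1) * cc a (k-1) = a^2 * dd a k"
proof -
  assume k: "k \<ge> 1"
  from arg_cong[OF PE3[OF k], of "\<lambda>p. poly p a"] show ?thesis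
    by (simp add: cc_def dd_def power2_eq_square algebra_simps)
qed

lemma cc0: "cc a 0 = 1" by (simp add: cc_def Cp_def pp_def)
lemma dd0: "dd a 0 = 0" by (simp add: dd_def Cp_def pp_def)

definition sq :: "complex \<Rightarrow> complex" where "sq z = csqrt (1 + z^2)"
definition gg :: "complex \<Rightarrow> complex" where "gg z = z / (1 + sq z)"
definition FF :: "real \<Rightarrow> complex \<Rightarrow> complex" where "FF a z = exp (of_real a * gg z)"
definition GG :: "real \<Rightarrow> complex \<Rightarrow> complex" where "GG a z = gg z * FF a z"

lemma Re_pos: assumes "z \<in> ball 0 1" shows "Re (1 + z^2) > 0"
proof -
  have "Re (z^2) = (Re z)^2 - (Im z)^2" by (simp add: power2_eq_square)
  moreover have "norm z < 1" using assms by simp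
  hence "sqrt ((Re z)^2 + (Im z)^2) < 1" by (simp add: cmod_def)
  hence "(Re z)^2 + (Im z)^2 < 1" by simp
  ultimately show ?thesis by simp (smt (verit) zero_le_power2)
qed

lemma notnp: "(z::complex) \<in> ball 0 1 \<Longrightarrow> 1 + z^2 \<notin> \<real>\<^sub>\<le>\<^sub>0"
  using Re_pos[of z] by (auto simp: complex_nonpos_Reals_iff)

lemma sq_sq: "(sq z)^2 = 1 + z^2" by (simp add: sq_def)
lemma Re_sq: "Re (sq z) \<ge> 0" unfolding sq_def by (rule Re_csqrt)
lemma sq_nz: "z \<in> ball 0 1 \<Longrightarrow> sq z \<noteq> 0"
proof
  assume z: "z \<in> ball 0 1" and "sq z = 0"
  hence "1 + z^2 = 0" using sq_sq[of z] by simp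
  hence "Re (1 + z^2) = 0" by (simp only: zero_complex.sel)
  thus False using Re_pos[OF z] by simp
qed
lemma sq1_nz: "1 + sq z \<noteq> 0"
proof
  assume "1 + sq z = 0"
  hence "Re (1 + sq z) = 0" by simp
  thus False using Re_sq[of z] by simp
qed

lemma sq_deriv: "z \<in> ball 0 1 \<Longrightarrow> (sq has_field_derivative z / sq z) (at z)"
proof -
  assume z: "z \<in> ball 0 1"
  have "((\<lambda>z. 1 + z^2) has_field_derivative 2 * z) (at z)"
    by (auto intro!: derivative_eq_intros)
  from has_field_derivative_csqrt'[OF this notnp[OF z]]
  show ?thesis unfolding sq_def[abs_def] by simp
qed

lemma gg_deriv: "z \<in> ball 0 1 \<Longrightarrow> (gg has_field_derivative 1 / (sq z * (1 + sq z))) (at z)"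
proof -
  assume z: "z \<in> ball 0 1"
  have "(gg has_field_derivative ((1 * (1 + sq z) - z * (z / sq z)) / (1 + sq z)^2)) (at z)"
    unfolding gg_def[abs_def]
    by (rule derivative_eq_intros sq_deriv[OF z] | use sq1_nz in \<open>simp add: power2_eq_square\<close>)+
  moreover have "(1 * (1 + sq z) - z * (z / sq z)) / (1 + sq z)^2 = 1 / (sq z * (1 + sq z))"
  proof -
    have "z * z = sq z * sq z - 1" using sq_sq[of z] by (simp add: power2_eq_square)
    thus ?thesis using sq_nz[OF z] sq1_nz[of z]
      by (simp add: divide_simps power2_eq_square) (simp add: algebra_simps)
  qed
  ultimately show ?thesis by simp
qed

lemma FF_deriv: "z \<in> ball 0 1 \<Longrightarrow> (FF a has_field_derivative (of_real a * (1 / (sq z * (1 + sq z)))) * FF a z) (at z)"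
  unfolding FF_def[abs_def]
  by (rule derivative_eq_intros gg_deriv | assumption | simp)+

lemma GG_deriv: "z \<in> ball 0 1 \<Longrightarrow> (GG a has_field_derivative
   (1 / (sq z * (1 + sq z))) * FF a z + gg z * ((of_real a * (1 / (sq z * (1 + sq z)))) * FF a z)) (at z)"
  unfolding GG_def[abs_def]
  by (rule derivative_eq_intros gg_deriv FF_deriv | assumption | simp)+

lemma FF_hol: "FF a holomorphic_on ball 0 1"
  unfolding holomorphic_on_open[OF open_ball] using FF_deriv by blast
lemma GG_hol: "GG a holomorphic_on ball 0 1"
  unfolding holomorphic_on_open[OF open_ball] using GG_deriv by blast

lemma I1: assumes z: "z \<in> ball 0 1"
  shows "z * (1 + z^2) * deriv (FF a) z = of_real a * (z * FF a z - GG a z)"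
proof -
  have d: "deriv (FF a) z = (of_real a * (1 / (sq z * (1 + sq z)))) * FF a z"
    using FF_deriv[OF z] by (rule DERIV_imp_deriv)
  have "1 + z^2 = sq z * sq z" using sq_sq[of z] by (simp add: power2_eq_square)
  thus ?thesis unfolding d GG_def gg_def using sq_nz[OF z] sq1_nz[of z]
    by (simp add: divide_simps) (simp add: algebra_simps)
qed

lemma I3: assumes z: "z \<in> ball 0 1"
  shows "of_real a * z * deriv (FF a) z + of_real a * z^2 * deriv (GG a) z - z^2 * deriv (FF a) z
    = (of_real a)^2 * GG a z"
proof -
  have d: "deriv (FF a) z = (of_real a * (1 / (sq z * (1 + sq z)))) * FF a z"
    using FF_deriv[OF z] by (rule DERIV_imp_deriv)
  have d2: "deriv (GG a) z = (1 / (sq z * (1 + sq z))) * FF a z + gg z * ((of_real a * (1 / (sq z * (1 + sq z)))) * FF a z)"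
    using GG_deriv[OF z] by (rule DERIV_imp_deriv)
  have "z * z = sq z * sq z - 1" using sq_sq[of z] by (simp add: power2_eq_square)
  thus ?thesis unfolding d d2 GG_def gg_def using sq_nz[OF z] sq1_nz[of z]
    by (simp add: divide_simps power2_eq_square) (simp add: algebra_simps)
qed

lemma ev_ball: "eventually (\<lambda>z::complex. z \<in> ball 0 1) (nhds 0)"
  by (intro eventually_nhds_in_open) auto

lemma hasP: "FF a has_fps_expansion fps_expansion (FF a) 0"
  by (rule has_fps_expansion_fps_expansion[OF open_ball _ FF_hol]) simp
lemma hasQ: "GG a has_fps_expansion fps_expansion (GG a) 0"
  by (rule has_fps_expansion_fps_expansion[OF open_ball _ GG_hol]) simp

lemma E1: "fps_X * (1 + fps_X^2) * fps_deriv (fps_expansion (FF a) 0)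
    = fps_const (of_real a) * (fps_X * fps_expansion (FF a) 0 - fps_expansion (GG a) 0)"
proof -
  define P where "P = fps_expansion (FF a) 0"
  define Q where "Q = fps_expansion (GG a) 0"
  have hP: "FF a has_fps_expansion P" unfolding P_def by (rule hasP)
  have hQ: "GG a has_fps_expansion Q" unfolding Q_def by (rule hasQ)
  have h1: "(\<lambda>z. z * (1 + z^2) * deriv (FF a) z) has_fps_expansion fps_X * (1 + fps_X^2) * fps_deriv P"
    by (intro has_fps_expansion_mult has_fps_expansion_add has_fps_expansion_fps_X has_fps_expansion_1
        has_fps_expansion_fps_X_power has_fps_expansion_deriv hP)
  have h2: "(\<lambda>z. of_real a * (z * FF a z - GG a z)) has_fps_expansion fps_const (of_real a) * (fps_X * P - Q)"
    by (intro has_fps_expansion_cmult_left has_fps_expansion_diff has_fps_expansion_mult has_fps_expansion_fps_X hP hQ)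
  have ev: "eventually (\<lambda>z. z * (1 + z^2) * deriv (FF a) z = of_real a * (z * FF a z - GG a z)) (nhds 0)"
    using ev_ball by (rule eventually_mono) (rule I1)
  have h1': "(\<lambda>z. of_real a * (z * FF a z - GG a z)) has_fps_expansion fps_X * (1 + fps_X^2) * fps_deriv P"
    using has_fps_expansion_cong[OF ev refl] h1 by simp
  show ?thesis using fps_expansion_unique_complex[OF h1' h2] unfolding P_def Q_def .
qed

lemma E3: "fps_const (of_real a) * fps_X * fps_deriv (fps_expansion (FF a) 0)
    + fps_const (of_real a) * fps_X^2 * fps_deriv (fps_expansion (GG a) 0)
    - fps_X^2 * fps_deriv (fps_expansion (FF a) 0) = fps_const ((of_real a)^2) * fps_expansion (GG a) 0"
proof -
  define P where "P = fps_expansion (FF a) 0"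
  define Q where "Q = fps_expansion (GG a) 0"
  have hP: "FF a has_fps_expansion P" unfolding P_def by (rule hasP)
  have hQ: "GG a has_fps_expansion Q" unfolding Q_def by (rule hasQ)
  have h1: "(\<lambda>z. of_real a * z * deriv (FF a) z + of_real a * z^2 * deriv (GG a) z - z^2 * deriv (FF a) z)
     has_fps_expansion fps_const (of_real a) * fps_X * fps_deriv P
    + fps_const (of_real a) * fps_X^2 * fps_deriv Q - fps_X^2 * fps_deriv P"
    by (intro has_fps_expansion_mult has_fps_expansion_add has_fps_expansion_diff has_fps_expansion_fps_X
        has_fps_expansion_const has_fps_expansion_fps_X_power has_fps_expansion_deriv hP hQ)
  have h2: "(\<lambda>z. (of_real a)^2 * GG a z) has_fps_expansion fps_const ((of_real a)^2) * Q"
    by (intro has_fps_expansion_cmult_left hQ)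
  have ev: "eventually (\<lambda>z. of_real a * z * deriv (FF a) z + of_real a * z^2 * deriv (GG a) z - z^2 * deriv (FF a) z
     = (of_real a)^2 * GG a z) (nhds 0)"
    using ev_ball by (rule eventually_mono) (rule I3)
  have h1': "(\<lambda>z. (of_real a)^2 * GG a z) has_fps_expansion fps_const (of_real a) * fps_X * fps_deriv P
    + fps_const (of_real a) * fps_X^2 * fps_deriv Q - fps_X^2 * fps_deriv P"
    using has_fps_expansion_cong[OF ev refl] h1 by simp
  show ?thesis using fps_expansion_unique_complex[OF h1' h2] unfolding P_def Q_def .
qed

lemma C1: assumes k: "k \<ge> 1"
  shows "of_nat k * fps_expansion (FF a) 0 $ k + (if k \<ge> 2 then (of_nat k - 2) * fps_expansion (FF a) 0 $ (k-2) else 0)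
     + of_real a * fps_expansion (GG a) 0 $ k = of_real a * fps_expansion (FF a) 0 $ (k-1)"
proof -
  define P where "P = fps_expansion (FF a) 0"
  define Q where "Q = fps_expansion (GG a) 0"
  have e: "(fps_X * ((1 + fps_X^2) * fps_deriv P)) $ k = (fps_const (of_real a) * (fps_X * P - Q)) $ k"
    using E1[of a] unfolding P_def[symmetric] Q_def[symmetric] by (simp add: mult.assoc)
  have l: "(fps_X * ((1 + fps_X^2) * fps_deriv P)) $ k = of_nat k * P $ k + (if k \<ge> 2 then (of_nat k - 2) * P $ (k-2) else 0)"
  proof -
    have "(fps_X * ((1 + fps_X^2) * fps_deriv P)) $ k = ((1 + fps_X^2) * fps_deriv P) $ (k-1)"
      using k by simp
    also have "... = fps_deriv P $ (k-1) + (fps_X^2 * fps_deriv P) $ (k-1)" by (simp add: distrib_right)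
    also have "... = of_nat k * P $ k + (if k \<ge> 2 then (of_nat k - 2) * P $ (k-2) else 0)"
    proof (cases "k \<ge> 3")
      case True
      then obtain m where "k = m + 3" by (metis add.commute le_Suc_ex)
      thus ?thesis by (simp add: fps_X_power_mult_nth algebra_simps numeral_eq_Suc)
    next
      case False
      hence "k = 1 \<or> k = 2" using k by auto
      thus ?thesis by (auto simp: fps_X_power_mult_nth)
    qed
    finally show ?thesis .
  qed
  have r: "(fps_const (of_real a) * (fps_X * P - Q)) $ k = of_real a * (P $ (k-1) - Q $ k)" using k by simp
  show ?thesis using e l r unfolding P_def[symmetric] Q_def[symmetric] by (simp add: algebra_simps)
qed

lemma C3: assumes k: "k \<ge> 1"
  shows "of_real a * of_nat k * fps_expansion (FF a) 0 $ k + of_real a * (of_nat k - 1) * fps_expansion (GG a) 0 $ (k-1)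
     - (of_nat k - 1) * fps_expansion (FF a) 0 $ (k-1) = (of_real a)^2 * fps_expansion (GG a) 0 $ k"
proof -
  define P where "P = fps_expansion (FF a) 0"
  define Q where "Q = fps_expansion (GG a) 0"
  have e: "(fps_const (of_real a) * (fps_X * fps_deriv P) + fps_const (of_real a) * (fps_X^2 * fps_deriv Q)
      - fps_X^2 * fps_deriv P) $ k = (fps_const ((of_real a)^2) * Q) $ k"
    using E3[of a] unfolding P_def[symmetric] Q_def[symmetric] by (simp add: mult.assoc)
  have x2: "(fps_X^2 * fps_deriv R) $ k = (of_nat k - 1) * R $ (k-1)" for R :: "complex fps"
  proof (cases "k \<ge> 2")
    case True
    then obtain m where "k = m + 2" by (metis add.commute le_Suc_ex)
    thus ?thesis by (simp add: fps_X_power_mult_nth algebra_simps numeral_eq_Suc)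
  next
    case False hence "k = 1" using k by auto
    thus ?thesis by (simp add: fps_X_power_mult_nth)
  qed
  have x1: "(fps_X * fps_deriv P) $ k = of_nat k * P $ k" using k by simp
  show ?thesis using e unfolding fps_sub_nth fps_add_nth fps_mult_left_const_nth x1 x2
    unfolding P_def[symmetric] Q_def[symmetric] by (simp add: algebra_simps)
qed

lemma nth0: "fps_expansion (FF a) 0 $ 0 = 1" "fps_expansion (GG a) 0 $ 0 = 0"
  by (simp_all add: fps_expansion_def FF_def GG_def gg_def)

lemma coeffs: assumes a: "a \<noteq> 0"
  shows "fps_expansion (FF a) 0 $ k = of_real (cc a k) \<and> fps_expansion (GG a) 0 $ k = of_real (dd a k)"
proof (induction k rule: less_induct)
  case (less k)
  define P where "P = fps_expansion (FF a) 0"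
  define Q where "Q = fps_expansion (GG a) 0"
  show ?case
  proof (cases "k = 0")
    case True thus ?thesis using nth0 cc0 dd0 by simp
  next
    case False
    hence k: "k \<ge> 1" by simp
    have ih1: "P $ (k-1) = of_real (cc a (k-1))" "Q $ (k-1) = of_real (dd a (k-1))"
      using less[of "k-1"] k unfolding P_def Q_def by auto
    have ih2: "k \<ge> 2 \<Longrightarrow> P $ (k-2) = of_real (cc a (k-2))"
      using less[of "k-2"] k unfolding P_def Q_def by auto
    have c1: "of_nat k * P $ k + (if k \<ge> 2 then (of_nat k - 2) * of_real (cc a (k-2)) else 0)
     + of_real a * Q $ k = of_real a * of_real (cc a (k-1))"
      using C1[OF k, of a] ih1 ih2 unfolding P_def[symmetric] Q_def[symmetric] by (cases "k \<ge> 2") auto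
    have c3: "of_real a * of_nat k * P $ k + of_real a * (of_nat k - 1) * of_real (dd a (k-1))
     - (of_nat k - 1) * of_real (cc a (k-1)) = (of_real a)^2 * Q $ k"
      using C3[OF k, of a] ih1 unfolding P_def[symmetric] Q_def[symmetric] by simp
    have r1: "of_nat k * of_real (cc a k) + (if k \<ge> 2 then (of_nat k - 2) * of_real (cc a (k-2)) else 0)
     + of_real a * of_real (dd a k) = (of_real a * of_real (cc a (k-1)) :: complex)"
      using arg_cong[OF R1[OF k, of a], of complex_of_real] by (cases "k \<ge> 2") auto
    have r3: "of_real a * of_nat k * of_real (cc a k) + of_real a * (of_nat k - 1) * of_real (dd a (k-1))
     - (of_nat k - 1) * of_real (cc a (k-1)) = (of_real a)^2 * (of_real (dd a k) :: complex)"
      using arg_cong[OF R3[OF k, of a], of complex_of_real] by simp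
    define x where "x = P $ k - of_real (cc a k)"
    define y where "y = Q $ k - of_real (dd a k)"
    define E where "E = (if k \<ge> 2 then (of_nat k - 2) * of_real (cc a (k-2)) else (0::complex))"
    have d1: "of_nat k * x + of_real a * y = 0"
    proof -
      have "of_nat k * x + of_real a * y = (of_nat k * P $ k + E + of_real a * Q $ k)
         - (of_nat k * of_real (cc a k) + E + of_real a * of_real (dd a k))"
        unfolding x_def y_def by (simp add: algebra_simps)
      also have "... = 0" using c1 r1 unfolding E_def[symmetric] by simp
      finally show ?thesis .
    qed
    define K where "K = of_real a * (of_nat k - 1) * of_real (dd a (k-1)) - (of_nat k - 1) * (of_real (cc a (k-1)) :: complex)"
    have d3: "of_real a * of_nat k * x = (of_real a)^2 * y"
    proof -
      have "of_real a * of_nat k * x - (of_real a)^2 * y = (of_real a * of_nat k * P $ k + K - (of_real a)^2 * Q $ k)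
         - (of_real a * of_nat k * of_real (cc a k) + K - (of_real a)^2 * of_real (dd a k))"
        unfolding x_def y_def by (simp add: algebra_simps)
      also have "... = 0" using c3 r3 unfolding K_def by (simp add: algebra_simps)
      finally show ?thesis by simp
    qed
    have kx: "of_nat k * x = - (of_real a * y)" using d1 by (simp add: eq_neg_iff_add_eq_0)
    have "(of_real a)^2 * y = - ((of_real a)^2 * y)" using d3 kx by (auto simp: power2_eq_square algebra_simps)
    hence "(of_real a)^2 * y = 0" by auto
    hence y0: "y = 0" using a by simp
    hence x0: "x = 0" using kx k by simp
    have "y = 0" by (rule y0)
    thus ?thesis using x0 unfolding x_def y_def P_def Q_def by simp
  qed
qed

lemma real_series: assumes a: "a \<noteq> 0" and t: "\<bar>t\<bar> < 1"
  shows "(\<lambda>n. cc a n * t^n) sums exp (a * (t / (1 + sqrt (1 + t^2))))"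
proof -
  have w: "complex_of_real t \<in> ball 0 1" using t by simp
  from holomorphic_power_series[OF FF_hol w]
  have "(\<lambda>n. (deriv ^^ n) (FF a) 0 / fact n * (complex_of_real t - 0) ^ n) sums FF a (complex_of_real t)" .
  moreover have "(deriv ^^ n) (FF a) 0 / fact n = complex_of_real (cc a n)" for n
    using coeffs[OF a, of n] by (simp add: fps_expansion_def)
  moreover have "sq (complex_of_real t) = complex_of_real (sqrt (1 + t^2))"
  proof -
    have "1 + (complex_of_real t)^2 = complex_of_real (1 + t^2)" by simp
    thus ?thesis unfolding sq_def by (simp del: of_real_add of_real_power)
  qed
  hence "FF a (complex_of_real t) = complex_of_real (exp (a * (t / (1 + sqrt (1 + t^2)))))"
    unfolding FF_def gg_def by (simp add: exp_of_real[symmetric])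
  ultimately have "(\<lambda>n. complex_of_real (cc a n * t^n)) sums complex_of_real (exp (a * (t / (1 + sqrt (1 + t^2)))))"
    by simp
  thus ?thesis by (simp only: sums_of_real_iff)
qed

lemma pp_bound: assumes k: "k \<ge> 1" and j: "j \<ge> 1"
  shows "\<bar>pp k j\<bar> \<le> 1 / (real k * fact (j-1))"
proof (cases "\<exists>i. k = j + 2*i")
  case False thus ?thesis using k by (simp add: pp_zero)
next
  case True
  then obtain i where ki: "k = j + 2*i" by blast
  have e: "pp k j = (-1)^i * fact (k-1) / (2^k * fact i * fact (j+i) * fact (j-1))"
    using pp_form[of j i] ki j by simp
  have ik: "i \<le> k" using ki by simp
  have kmi: "k - i = j + i" using ki by simp
  have bf: "real (k choose i) = fact k / (fact i * fact (j+i))"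
    using binomial_fact[OF ik] kmi by simp
  have fk: "(fact k :: real) = real k * fact (k-1)" using k
    by (metis Suc_diff_1 fact_Suc less_le_trans zero_less_one)
  have le: "real (k choose i) \<le> 2^k" using binomial_le_pow2[of k i] by (simp del: of_nat_power add: of_nat_power[symmetric])
  have "fact (k-1) / (fact i * fact (j+i)) = real (k choose i) / real k"
    using k unfolding bf fk by (simp add: field_simps)
  also have "... \<le> 2^k / real k" using le k by (simp add: divide_right_mono)
  finally have A: "fact (k-1) / (fact i * fact (j+i)) \<le> (2::real)^k / real k" .
  have "\<bar>pp k j\<bar> = (fact (k-1) / (fact i * fact (j+i))) / (2^k * fact (j-1))"
    unfolding e by (simp add: abs_mult field_simps)
  also have "... \<le> (2^k / real k) / (2^k * fact (j-1))"
    by (rule divide_right_mono[OF A]) simp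
  also have "... = 1 / (real k * fact (j-1))" by simp
  finally show ?thesis .
qed

lemma cc_sum: "cc a k = (\<Sum>j\<le>k. pp k j * a^j)"
  unfolding cc_def Cp_def by (simp add: poly_sum poly_monom)

lemma exp_partial: assumes "(a::real) \<ge> 0" shows "(\<Sum>m\<le>n. a^m / fact m) \<le> exp a"
proof -
  have s: "(\<lambda>m. a^m / fact m) sums exp a" using exp_converges[of a] by (simp add: real_scaleR_def divide_inverse mult.commute)
  have "(\<Sum>m\<le>n. a^m / fact m) \<le> suminf (\<lambda>m. a^m / fact m)"
    by (rule sum_le_suminf) (use s assms in \<open>auto simp: sums_iff\<close>)
  thus ?thesis using s by (simp add: sums_iff)
qed

lemma cc_bound: assumes a: "a \<ge> 0" and k: "k \<ge> 1"
  shows "\<bar>cc a k\<bar> \<le> a * exp a / real k"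
proof -
  obtain k' where k': "k = Suc k'" using k by (cases k) auto
  have "\<bar>cc a k\<bar> \<le> (\<Sum>j\<le>k. \<bar>pp k j * a^j\<bar>)" unfolding cc_sum by (rule sum_abs)
  also have "... = (\<Sum>m\<le>k'. \<bar>pp k (Suc m) * a^(Suc m)\<bar>)"
    unfolding k' sum.atMost_Suc_shift using k' by (simp add: pp_k0)
  also have "... \<le> (\<Sum>m\<le>k'. a^(Suc m) / (real k * fact m))"
  proof (rule sum_mono)
    fix m assume "m \<in> {..k'}"
    have "\<bar>pp k (Suc m)\<bar> \<le> 1 / (real k * fact m)" using pp_bound[OF k, of "Suc m"] by simp
    hence "\<bar>pp k (Suc m)\<bar> * a^(Suc m) \<le> 1 / (real k * fact m) * a^(Suc m)"
      by (rule mult_right_mono) (use a in simp)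
    thus "\<bar>pp k (Suc m) * a^(Suc m)\<bar> \<le> a^(Suc m) / (real k * fact m)" using a by (simp add: abs_mult)
  qed
  also have "... = a / real k * (\<Sum>m\<le>k'. a^m / fact m)"
    by (simp add: sum_distrib_left field_simps)
  also have "... \<le> a / real k * exp a"
    by (rule mult_left_mono[OF exp_partial[OF a]]) (use a in simp)
  finally show ?thesis by simp
qed

lemma sum_split_par: "(\<Sum>j\<le>2*(m::nat). f j) = (\<Sum>w\<le>m. f (2*w)) + (\<Sum>w<m. f (2*w+1))"
proof (induction m)
  case 0 thus ?case by simp
next
  case (Suc m)
  have "(\<Sum>j\<le>2*Suc m. f j) = (\<Sum>j\<le>2*m. f j) + f (2*m+1) + f (2*m+2)"
    by (simp add: numeral_eq_Suc)
  thus ?case using Suc by (simp add: algebra_simps)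
qed

lemma sum_split_par': "(\<Sum>j\<le>2*(m::nat)+1. f j) = (\<Sum>w\<le>m. f (2*w)) + (\<Sum>w\<le>m. f (2*w+1))"
  using sum_split_par[of f m] by (simp add: lessThan_Suc_atMost[symmetric] add.assoc)

definition aa :: real where "aa = pi / (3 * sqrt 2)"

lemma aa_sq: "aa^2 = pi^2 / 18"
  unfolding aa_def by (simp add: power_divide power_mult_distrib)

lemma cc_even: assumes m: "m \<ge> 1" shows "cc aa (2*m) = 24^m * e1 m"
proof -
  have odd0: "pp (2*m) (2*w+1) = 0" for w
    by (rule pp_zero) presburger
  have "cc aa (2*m) = (\<Sum>w\<le>m. pp (2*m) (2*w) * aa^(2*w))"
    unfolding cc_sum sum_split_par odd0 by simp
  also have "... = pp (2*m) 0 * aa^0 + (\<Sum>w=1..m. pp (2*m) (2*w) * aa^(2*w))"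
    by (simp add: atMost_atLeast0 sum.atLeast_Suc_atMost)
  also have "... = (\<Sum>w=1..m. 24^m * (fact (2*m-1) / (-96)^m *
        ((-(pi^2)/18)^w / (fact (2*w-1) * fact (w+m) * fact (m-w)))))"
  proof -
    have "pp (2*m) 0 = 0" using m by (simp add: pp_k0)
    moreover have "pp (2*m) (2*w) * aa^(2*w) = 24^m * (fact (2*m-1) / (-96)^m *
        ((-(pi^2)/18)^w / (fact (2*w-1) * fact (w+m) * fact (m-w))))" if w: "w \<in> {1..m}" for w
    proof -
      have vm: "w \<le> m" "w \<ge> 1" using w by auto
      have eq: "2*w + 2*(m-w) = 2*m" using vm by simp
      have "pp (2*m) (2*w) = pp (2*w + 2*(m-w)) (2*w)" by (simp only: eq)
      also have "... = (-1)^(m-w) * fact (2*m-1) / (2^(2*m) * fact (m-w) * fact (m+w) * fact (2*w-1))"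
        using vm by (subst pp_form) (simp add: algebra_simps)
      finally have e: "pp (2*m) (2*w) = (-1)^(m-w) * fact (2*m-1) / (2^(2*m) * fact (m-w) * fact (m+w) * fact (2*w-1))" .
      have a2: "aa^(2*w) = (pi^2/18)^w" by (simp add: power_mult aa_sq)
      have s: "(-1::real)^(m-w) * (-1)^w = (-1)^m" using vm by (simp add: power_add[symmetric])
      have n: "(-(pi^2)/18)^w = (-1)^w * (pi^2/18)^w" by (simp add: power_mult_distrib[symmetric])
      have q: "(-96::real)^m = (-1)^m * 24^m * 2^(2*m)"
        by (simp add: power_mult_distrib[symmetric] power_mult)
      define X where "X = (pi^2/18)^w"
      define S1 where "S1 = (-1::real)^(m-w)"
      define S2 where "S2 = (-1::real)^w"
      have S2sq: "S2 * S2 = 1" unfolding S2_def by (simp add: power_mult_distrib[symmetric])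
      have S1sq: "S1 * S1 = 1" unfolding S1_def by (simp add: power_mult_distrib[symmetric])
      have sm: "(-1::real)^m = S1 * S2" using s unfolding S1_def S2_def by simp
      have c1: "S1 = 1 \<or> S1 = -1" unfolding S1_def by (metis neg_one_even_power neg_one_odd_power)
      have c2: "S2 = 1 \<or> S2 = -1" unfolding S2_def by (metis neg_one_even_power neg_one_odd_power)
      show ?thesis unfolding e a2 n q sm X_def[symmetric] S1_def[symmetric] S2_def[symmetric]
        using c1 c2 by (elim disjE) (simp_all add: field_simps)
    qed
    ultimately show ?thesis by simp
  qed
  also have "... = 24^m * e1 m" using m unfolding e1_def by (simp add: sum_distrib_left)
  finally show ?thesis .
qed

lemma key24: "sqrt 24 * pi / (24 * sqrt 3) = aa / 2"
proof -
  have "sqrt 24 = 2 * sqrt 2 * sqrt 3"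
  proof -
    have "sqrt 24 = sqrt (4 * (2 * 3::real))" by simp
    also have "... = 2 * (sqrt 2 * sqrt 3)" by (simp only: real_sqrt_mult real_sqrt_four)
    finally show ?thesis by simp
  qed
  moreover have "sqrt 2 * sqrt 2 = (2::real)" by simp
  ultimately show ?thesis unfolding aa_def by (simp add: field_simps)
qed

lemma cc_odd: "cc aa (2*m+1) = 24^m * sqrt 24 * o1 m"
proof -
  have ev0: "pp (2*m+1) (2*w) = 0" for w
    by (rule pp_zero) presburger
  have "cc aa (2*m+1) = (\<Sum>w\<le>m. pp (2*m+1) (2*w+1) * aa^(2*w+1))"
    unfolding cc_sum sum_split_par' ev0 by simp
  also have "... = (\<Sum>w=0..m. 24^m * sqrt 24 * (pi * fact (2*m) / (24 * sqrt 3 * (-96)^m) *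
        ((-(pi^2)/18)^w / (fact (2*w) * fact (m-w) * fact (w+m+1)))))"
    unfolding atMost_atLeast0
  proof (rule sum.cong[OF refl])
    fix w assume "w \<in> {0..m}"
    hence vm: "w \<le> m" by auto
    have eq: "(2*w+1) + 2*(m-w) = 2*m+1" using vm by simp
    have "pp (2*m+1) (2*w+1) = pp ((2*w+1) + 2*(m-w)) (2*w+1)" by (simp only: eq)
    also have "... = (-1)^(m-w) * fact (2*m) / (2^(2*m+1) * fact (m-w) * fact (m+w+1) * fact (2*w))"
      using vm by (subst pp_form) (simp add: algebra_simps)
    finally have e: "pp (2*m+1) (2*w+1) = (-1)^(m-w) * fact (2*m) / (2^(2*m+1) * fact (m-w) * fact (m+w+1) * fact (2*w))" .
    have a2: "aa^(2*w+1) = aa * (pi^2/18)^w" by (simp add: power_mult aa_sq)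
    have s: "(-1::real)^(m-w) * (-1)^w = (-1)^m" using vm by (simp add: power_add[symmetric])
    have n: "(-(pi^2)/18)^w = (-1)^w * (pi^2/18)^w" by (simp add: power_mult_distrib[symmetric])
    have q: "(-96::real)^m = (-1)^m * 24^m * 2^(2*m)"
      by (simp add: power_mult_distrib[symmetric] power_mult)
    have r: "24^m * sqrt 24 * (pi * fact (2*m) / (24 * sqrt 3 * (-96)^m) * Z)
       = 24^m * (sqrt 24 * pi / (24 * sqrt 3)) * fact (2*m) / (-96)^m * Z" for Z :: real
      by (simp add: field_simps)
    define X where "X = (pi^2/18)^w"
    define S1 where "S1 = (-1::real)^(m-w)"
    define S2 where "S2 = (-1::real)^w"
    have sm: "(-1::real)^m = S1 * S2" using s unfolding S1_def S2_def by simp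
    have c1: "S1 = 1 \<or> S1 = -1" unfolding S1_def by (metis neg_one_even_power neg_one_odd_power)
    have c2: "S2 = 1 \<or> S2 = -1" unfolding S2_def by (metis neg_one_even_power neg_one_odd_power)
    show "pp (2*m+1) (2*w+1) * aa^(2*w+1) = 24^m * sqrt 24 * (pi * fact (2*m) / (24 * sqrt 3 * (-96)^m) *
        ((-(pi^2)/18)^w / (fact (2*w) * fact (m-w) * fact (w+m+1))))"
      unfolding r key24 unfolding e a2 n q sm X_def[symmetric] S1_def[symmetric] S2_def[symmetric]
      using c1 c2 by (elim disjE) (simp_all add: field_simps)
  qed
  also have "... = 24^m * sqrt 24 * o1 m" unfolding o1_def by (simp add: sum_distrib_left)
  finally show ?thesis .
qed

lemma aa_pos: "aa > 0" unfolding aa_def by simp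

lemma aa_le: "aa \<le> 3/4"
proof -
  have p: "pi \<le> 3.15" using pi_approx by simp
  have s: "sqrt 2 \<ge> (1.4::real)"
    by (rule real_le_rsqrt) (simp add: power2_eq_square)
  have "pi / (3 * sqrt 2) \<le> 3.15 / (3 * 1.4)"
    by (rule frac_le) (use p s in auto)
  thus ?thesis unfolding aa_def by simp
qed

lemma aexp_le: "aa * exp aa \<le> 9/4"
proof -
  have "exp aa \<le> exp 1" using aa_le by simp
  also have "... \<le> 3" by (rule exp_le)
  finally have "exp aa \<le> 3" .
  hence "aa * exp aa \<le> 3/4 * 3" using aa_le aa_pos by (intro mult_mono) auto
  thus ?thesis by simp
qed

lemma cc_tail_bound: "k \<ge> 5 \<Longrightarrow> \<bar>cc aa k\<bar> \<le> 9/20"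
proof -
  assume k: "k \<ge> 5"
  have "\<bar>cc aa k\<bar> \<le> aa * exp aa / real k" using cc_bound[of aa k] aa_pos k by simp
  also have "... \<le> (9/4) / 5" using aexp_le k aa_pos
    by (intro frac_le) auto
  finally show ?thesis by simp
qed

lemma cc_b: "cc aa k = sqrt 24 ^ k * b k"
proof (cases "even k")
  case True
  then obtain m where k: "k = 2*m" by (metis evenE)
  have s: "sqrt 24 ^ (2*m) = (24::real)^m" by (simp add: power_mult)
  show ?thesis
  proof (cases "m = 0")
    case True thus ?thesis using k by (simp add: cc0 b_def e1_def)
  next
    case False thus ?thesis using k cc_even[of m] s by (simp add: b_def)
  qed
next
  case False
  then obtain m where k: "k = 2*m+1" by (metis oddE)
  have s: "sqrt 24 ^ (2*m+1) = (24::real)^m * sqrt 24" by (simp add: power_mult)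
  show ?thesis using k cc_odd[of m] s by (simp add: b_def)
qed

lemma powr_half_pow: assumes "(y::real) > 0" shows "y powr (real m / 2) = sqrt y ^ m"
proof -
  have "sqrt y ^ m = (y powr (1/2)) powr (real m)"
    using assms by (simp add: powr_half_sqrt powr_realpow)
  also have "... = y powr (real m / 2)" by (simp add: powr_powr)
  finally show ?thesis by simp
qed

lemma nN_ge: assumes "N \<ge> 3" shows "nN N \<ge> 16"
proof -
  have "exp 1 \<le> (26::real)" using exp_le by simp
  hence l: "ln (6 * real N + 8) \<ge> 1" using assms
    by (subst ln_ge_iff) auto
  have "3 * (3 * real N + 4) * ln (6 * real N + 8) \<ge> 3 * 13 * 1"
    using assms l by (intro mult_mono) auto
  hence "(3 * (3 * real N + 4) * ln (6 * real N + 8)) / (1.3^2) \<ge> 2"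
    by (simp add: field_simps power2_eq_square)
  hence "((3 * (3 * real N + 4) * ln (6 * real N + 8)) / (1.3^2))^4 \<ge> 2^4"
    by (intro power_mono) auto
  thus ?thesis unfolding nN_def by simp
qed

lemma tail_bound:
  assumes t0: "0 < t" and t1: "t \<le> 1/16" and K: "K \<ge> 5"
    and s: "(\<lambda>i. cc aa (i + K) * t^(i + K)) sums E"
  shows "\<bar>E\<bar> \<le> 12/25 * t^K"
proof -
  define f where "f i = cc aa (i + K) * t^(i + K)" for i
  define g where "g i = 9/20 * t^K * t^i" for i
  have gs: "g sums (9/20 * t^K * (1 / (1 - t)))"
    unfolding g_def using t0 t1 by (intro sums_mult geometric_sums) auto
  have fg: "\<bar>f i\<bar> \<le> g i" for i
  proof -
    have "\<bar>f i\<bar> = \<bar>cc aa (i + K)\<bar> * t^(i+K)" unfolding f_def using t0 by (simp add: abs_mult)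
    also have "... \<le> 9/20 * t^(i+K)" using cc_tail_bound[of "i+K"] K t0 by (intro mult_right_mono) auto
    finally show ?thesis unfolding g_def by (simp add: power_add mult_ac)
  qed
  have sf: "summable f" using s unfolding f_def by (simp add: sums_iff)
  have sg: "summable g" using gs by (simp add: sums_iff)
  have E: "E = suminf f" using s unfolding f_def by (simp add: sums_iff)
  have "suminf f \<le> suminf g" using fg sf sg by (intro suminf_le) (auto simp: abs_le_iff)
  moreover have "- suminf f \<le> suminf g"
  proof -
    have "suminf (\<lambda>i. - f i) \<le> suminf g" using fg sf sg
      by (intro suminf_le summable_minus) (auto simp: abs_le_iff)
    thus ?thesis using suminf_minus[OF sf] by simp
  qed
  ultimately have "\<bar>E\<bar> \<le> suminf g" unfolding E by simp
  also have "... = 9/20 * t^K * (1 / (1 - t))" using gs by (simp add: sums_iff)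
  also have "... \<le> 9/20 * t^K * (16/15)"
    using t0 t1 by (intro mult_left_mono) (auto simp: field_simps)
  finally show ?thesis by simp
qed

theorem lemma3p12:
  fixes N n :: nat
  assumes "N \<ge> 3" and "real n \<ge> nN N"
  shows "\<exists>E::real. \<bar>E\<bar> \<le> (2 * 10 powr (-2)) / (24 powr (real N / 2)) * real n powr (-(real N + 2) / 2)
     \<and> exp (pi * sqrt (24 * real n + 1) / (3 * sqrt 2)) =
         exp (2 * pi * sqrt (real n / 3)) * ((\<Sum>m=0..N+1. b m / real n powr (real m / 2)) + E)"
proof -
  define x where "x = real n"
  have x16: "x \<ge> 16" using nN_ge[OF assms(1)] assms(2) unfolding x_def by simp
  define u where "u = sqrt (24 * x)"
  define v where "v = sqrt (24 * x + 1)"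
  define t where "t = 1 / u"
  have u16: "u \<ge> 16" unfolding u_def using x16 by (intro real_le_rsqrt) (simp add: power2_eq_square)
  have upos: "u > 0" using u16 by simp
  have vpos: "v > 0" unfolding v_def using x16 by simp
  have t0: "t > 0" unfolding t_def using upos by simp
  have t1: "t \<le> 1/16" unfolding t_def using u16 by (simp add: field_simps)
  have u2: "u^2 = 24 * x" unfolding u_def using x16 by simp
  have v2: "v^2 = 24 * x + 1" unfolding v_def using x16 by simp
  have sq1: "sqrt (1 + t^2) = v / u"
  proof -
    have "1 + t^2 = (v / u)^2" unfolding t_def using upos u2 v2 x16
      by (simp add: power_divide field_simps)
    thus ?thesis using upos vpos by simp
  qed
  have g: "t / (1 + sqrt (1 + t^2)) = v - u"
  proof -
    have "(v - u) * (v + u) = 1" using u2 v2 by (simp add: algebra_simps power2_eq_square)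
    thus ?thesis unfolding sq1 unfolding t_def using upos vpos by (simp add: field_simps)
  qed
  have ser: "(\<lambda>k. cc aa k * t^k) sums exp (aa * (v - u))"
    using real_series[of aa t] aa_pos t0 t1 g by simp
  define E where "E = exp (aa * (v - u)) - (\<Sum>i<N+2. cc aa i * t^i)"
  have sE: "(\<lambda>i. cc aa (i + (N+2)) * t^(i + (N+2))) sums E"
    unfolding E_def by (rule sums_split_initial_segment[OF ser])
  have bE: "\<bar>E\<bar> \<le> 12/25 * t^(N+2)"
    by (rule tail_bound[OF t0 t1 _ sE]) (use assms(1) in simp)
  have sx: "sqrt x > 0" using x16 by simp
  have us: "u = sqrt 24 * sqrt x" unfolding u_def by (simp add: real_sqrt_mult)
  have sum_eq: "(\<Sum>i<N+2. cc aa i * t^i) = (\<Sum>m=0..N+1. b m / x powr (real m / 2))"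
  proof -
    have "(\<Sum>i<N+2. cc aa i * t^i) = (\<Sum>m=0..N+1. cc aa m * t^m)"
      by (rule sum.cong) auto
    also have "... = (\<Sum>m=0..N+1. b m / x powr (real m / 2))"
    proof (rule sum.cong[OF refl])
      fix m
      have "cc aa m * t^m = sqrt 24 ^ m * b m / (sqrt 24 ^ m * sqrt x ^ m)"
        unfolding cc_b t_def us by (simp add: power_divide power_mult_distrib)
      also have "... = b m / sqrt x ^ m" by simp
      also have "... = b m / x powr (real m / 2)" using x16 by (simp add: powr_half_pow)
      finally show "cc aa m * t^m = b m / x powr (real m / 2)" .
    qed
    finally show ?thesis .
  qed
  have expo1: "pi * sqrt (24 * x + 1) / (3 * sqrt 2) = aa * v" unfolding aa_def v_def by simp
  have expo2: "2 * pi * sqrt (x / 3) = aa * u"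
  proof -
    have "sqrt (24 * x) = sqrt (36 * 2 * (x / 3))" by simp
    also have "... = 6 * sqrt 2 * sqrt (x / 3)" by (simp only: real_sqrt_mult) simp
    finally have "u = 6 * sqrt 2 * sqrt (x / 3)" unfolding u_def .
    thus ?thesis unfolding aa_def by simp
  qed
  have main: "exp (pi * sqrt (24 * x + 1) / (3 * sqrt 2)) =
         exp (2 * pi * sqrt (x / 3)) * ((\<Sum>m=0..N+1. b m / x powr (real m / 2)) + E)"
  proof -
    have "exp (aa * v) = exp (aa * u) * exp (aa * (v - u))" by (simp add: exp_add[symmetric] algebra_simps)
    moreover have "exp (aa * (v - u)) = (\<Sum>m=0..N+1. b m / x powr (real m / 2)) + E"
      unfolding E_def sum_eq by simp
    ultimately show ?thesis unfolding expo1 expo2 by simp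
  qed
  have bnd: "12/25 * t^(N+2) = (2 * 10 powr (-2)) / (24 powr (real N / 2)) * x powr (-(real N + 2) / 2)"
  proof -
    have p1: "24 powr (real N / 2) = sqrt 24 ^ N" by (rule powr_half_pow) simp
    have p2: "x powr (-(real N + 2) / 2) = 1 / sqrt x ^ (N+2)"
    proof -
      have e: "-(real N + 2) / 2 = - (real (N+2) / 2)" by (simp add: field_simps)
      have "x powr (-(real N + 2) / 2) = inverse (x powr (real (N+2) / 2))"
        unfolding e by (rule powr_minus)
      hence "x powr (-(real N + 2) / 2) = 1 / x powr (real (N+2) / 2)" by (simp only: inverse_eq_divide)
      thus ?thesis using powr_half_pow[of x "N+2"] x16 by simp
    qed
    have p3: "(10::real) powr (-2) = 1/100"
      by (simp add: powr_minus_divide[symmetric] powr_minus powr_numeral)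
    have s24: "sqrt 24 ^ (N+2) = (24::real) * sqrt 24 ^ N" by (simp add: power_add)
    show ?thesis unfolding p1 p2 p3 t_def us power_divide power_mult_distrib s24
      by (simp add: field_simps)
  qed
  show ?thesis
    using main bE bnd unfolding x_def by (intro exI[of _ E]) simp
qed

end
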